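(* Let $n\ge 2$ be an integer and let $f_n(t)=\dfrac{t^{n-1}}{(1-e^{-t})^2}$ for $t>0$. Then for every $a>0$, $$I_1(a;n):=\int_0^1\bigl[(2n-3)x^2-1\bigr]\,f_n\bigl(a(1+x)\bigr)\,f_n\bigl(a(1-x)\bigr)\,dx<0 .$$ *)

theory Defs
  imports "HOL-Analysis.Analysis"
begin

definition fn_aux :: "nat \<Rightarrow> real \<Rightarrow> real" where
  "fn_aux n t = t ^ (n - 1) / (1 - exp (- t))\<^sup>2"

definition I1 :: "real \<Rightarrow> nat \<Rightarrow> real" where
  "I1 a n = integral {0..1}
     (\<lambda>x. ((2 * real n - 3) * x\<^sup>2 - 1) * fn_aux n (a * (1 + x)) * fn_aux n (a * (1 - x)))"

end

theory Submission
  imports Defs "HOL-Real_Asymp.Real_Asymp"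
begin

definition qf :: "real \<Rightarrow> real" where
  "qf s = (if s = 0 then 1 else s / (1 - exp (- s)))"
definition dqf :: "real \<Rightarrow> real" where
  "dqf s = ((1 - exp (- s)) - s * exp (- s)) / (1 - exp (- s))\<^sup>2"
definition L1 :: "real \<Rightarrow> real" where
  "L1 s = 1 / s - exp (- s) / (1 - exp (- s))"

lemma den_pos: "s > 0 \<Longrightarrow> 0 < 1 - exp (- (s::real))"
  by simp

lemma qf_pos: "s \<ge> 0 \<Longrightarrow> qf s > 0"
  by (auto simp: qf_def)

lemma qf_deriv: assumes "s > 0" shows "(qf has_real_derivative dqf s) (at s)"
proof -
  have d: "((\<lambda>s. s / (1 - exp (- s))) has_real_derivative dqf s) (at s)"
    using den_pos[OF assms]
    by (auto intro!: derivative_eq_intros simp: dqf_def power2_eq_square field_simps)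
  show ?thesis
    apply (rule has_field_derivative_transform_within_open[OF d, of "{0<..}"])
    using assms by (auto simp: qf_def)
qed

lemma alg: fixes c s e :: real assumes "c \<noteq> 0" "s \<noteq> 0"
  shows "(c - s * e) / c\<^sup>2 = s / c * (1 / s - e / c)"
  using assms by (simp add: field_simps power2_eq_square)

lemma dqf_eq: fixes s :: real assumes "s > 0" shows "dqf s = qf s * L1 s"
proof -
  define e where "e = exp (- s)"
  have d: "1 - e \<noteq> 0" using den_pos[OF assms] unfolding e_def by simp
  have "dqf s = ((1 - e) - s * e) / (1 - e)\<^sup>2" by (simp add: dqf_def e_def)
  also have "\<dots> = s / (1 - e) * (1 / s - e / (1 - e))"
    using alg[OF d, of s e] assms by simp
  also have "\<dots> = qf s * L1 s" using assms by (simp add: qf_def L1_def e_def)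
  finally show ?thesis .
qed

lemma qf_isCont0: "isCont qf 0"
proof -
  have "((\<lambda>s::real. s / (1 - exp (- s))) \<longlongrightarrow> 1) (at 0)" by real_asymp
  then have "(qf \<longlongrightarrow> 1) (at 0)"
    by (rule Lim_transform_eventually) (auto simp: qf_def eventually_at_filter)
  then show ?thesis by (simp add: isCont_def qf_def)
qed

lemma qf_cont: "continuous_on {0..} qf"
proof (rule continuous_at_imp_continuous_on, intro ballI)
  fix s :: real assume "s \<in> {0..}"
  then show "isCont qf s"
    using qf_isCont0 qf_deriv[of s] DERIV_isCont by (cases "s = 0") auto
qed

lemma sinh_ineq: fixes t :: real assumes "t > 0" shows "2 * t < exp t - exp (- t)"
proof -
  have "(\<lambda>t. exp t - exp (- t) - 2 * t) 0 < (\<lambda>t. exp t - exp (- t) - 2 * t) t"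
  proof (rule DERIV_pos_imp_increasing_open[OF assms])
    fix x :: real assume x: "0 < x" "x < t"
    have "1 - (- x) < exp (- (- x))" using x exp_minus_greater[of "-x"] by simp
    moreover have "1 - x < exp (- x)" using x exp_minus_greater[of "x"] by simp
    ultimately have "exp x + exp (- x) - 2 > 0" by simp
    moreover have "((\<lambda>t. exp t - exp (- t) - 2 * t) has_real_derivative exp x + exp (- x) - 2) (at x)"
      by (auto intro!: derivative_eq_intros)
    ultimately show "\<exists>y. ((\<lambda>t. exp t - exp (- t) - 2 * t) has_real_derivative y) (at x) \<and> 0 < y" by blast
  qed (intro continuous_intros)
  then show ?thesis by simp
qed

lemma L1_deriv: fixes s :: real assumes "s > 0"
  shows "(L1 has_real_derivative (- 1 / s\<^sup>2 + exp (- s) / (1 - exp (- s))\<^sup>2)) (at s)"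
proof -
  have "((\<lambda>s. 1 / s - exp (- s) / (1 - exp (- s))) has_real_derivative (- 1 / s\<^sup>2 + exp (- s) / (1 - exp (- s))\<^sup>2)) (at s)"
    using den_pos[OF assms] assms
    by (auto intro!: derivative_eq_intros simp: power2_eq_square field_simps)
  then show ?thesis unfolding L1_def[abs_def] .
qed

lemma L1_deriv_neg: fixes s :: real assumes "s > 0"
  shows "- 1 / s\<^sup>2 + exp (- s) / (1 - exp (- s))\<^sup>2 < 0"
proof -
  have h: "2 * (s/2) < exp (s/2) - exp (- (s/2))" using sinh_ineq[of "s/2"] assms by simp
  have e: "exp (- (s/2)) * exp (- (s/2)) = exp (- s)" by (simp flip: exp_add)
  have "s * exp (- (s/2)) < 1 - exp (- s)"
  proof -
    have "s * exp (- (s/2)) < (exp (s/2) - exp (- (s/2))) * exp (- (s/2))"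
      using h by (intro mult_strict_right_mono) auto
    also have "\<dots> = 1 - exp (- s)" using e by (simp add: algebra_simps flip: exp_add)
    finally show ?thesis .
  qed
  then have "(s * exp (- (s/2)))\<^sup>2 < (1 - exp (- s))\<^sup>2"
    using assms by (intro power_strict_mono) auto
  then have "s\<^sup>2 * exp (- s) < (1 - exp (- s))\<^sup>2"
    using e by (simp add: power2_eq_square algebra_simps)
  then show ?thesis using den_pos[OF assms] assms
    by (simp add: field_simps)
qed

lemma L1_strict_dec: fixes u v :: real assumes "0 < v" "v < u" shows "L1 u < L1 v"
proof (rule DERIV_neg_imp_decreasing_open[OF assms(2)])
  fix x assume "v < x" "x < u"
  then show "\<exists>y. (L1 has_real_derivative y) (at x) \<and> y < 0"
    using L1_deriv L1_deriv_neg assms by (meson less_trans)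
next
  show "continuous_on {v..u} L1"
    by (rule continuous_at_imp_continuous_on, intro ballI, rule DERIV_isCont, rule L1_deriv)
      (use assms in auto)
qed

lemma qf_deriv_comp:
  assumes "(g has_real_derivative g') (at x)" "g x > 0"
  shows "((\<lambda>x. qf (g x)) has_real_derivative dqf (g x) * g') (at x)"
  using DERIV_chain2[OF qf_deriv[OF assms(2)] assms(1)] .

lemma qf_cont_comp:
  assumes "continuous_on S g" "\<And>x. x \<in> S \<Longrightarrow> g x \<ge> 0"
  shows "continuous_on S (\<lambda>x. qf (g x))"
  using continuous_on_compose2[OF qf_cont assms(1)] assms(2) by auto

lemma dqf_cont_comp:
  assumes "continuous_on S g" "\<And>x. x \<in> S \<Longrightarrow> g x > 0"
  shows "continuous_on S (\<lambda>x. dqf (g x))"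
proof -
  have nz: "\<And>x. x \<in> S \<Longrightarrow> g x \<noteq> 0" using assms(2) by (metis less_irrefl)
  have "\<And>x. x \<in> S \<Longrightarrow> (1 - exp (- g x))\<^sup>2 \<noteq> 0"
    using nz by simp
  with nz show ?thesis unfolding dqf_def
    by (intro continuous_intros assms(1)) auto
qed

definition hh :: "nat \<Rightarrow> real \<Rightarrow> real" where
  "hh m x = x * (1 - x\<^sup>2) ^ m"
definition dhh :: "nat \<Rightarrow> real \<Rightarrow> real" where
  "dhh m x = (1 - x\<^sup>2) ^ m - 2 * real m * x\<^sup>2 * (1 - x\<^sup>2) ^ (m - 1)"
definition pp :: "real \<Rightarrow> real \<Rightarrow> real" where
  "pp a x = qf (a * (1 + x)) * qf (a * (1 - x))"
definition dpp :: "real \<Rightarrow> real \<Rightarrow> real" where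
  "dpp a x = a * dqf (a * (1 + x)) * qf (a * (1 - x)) - a * qf (a * (1 + x)) * dqf (a * (1 - x))"

lemma hh_deriv: "(hh m has_real_derivative dhh m x) (at x)"
  unfolding hh_def[abs_def] dhh_def
  by (auto intro!: derivative_eq_intros simp: power2_eq_square algebra_simps)

lemma pp_deriv: assumes "a > 0" "-1 < x" "x < 1"
  shows "(pp a has_real_derivative dpp a x) (at x)"
proof -
  have d1: "((\<lambda>x. qf (a * (1 + x))) has_real_derivative dqf (a * (1 + x)) * a) (at x)"
    by (rule qf_deriv_comp) (use assms in \<open>auto intro!: derivative_eq_intros\<close>)
  have d2: "((\<lambda>x. qf (a * (1 - x))) has_real_derivative dqf (a * (1 - x)) * (- a)) (at x)"
    by (rule qf_deriv_comp) (use assms in \<open>auto intro!: derivative_eq_intros\<close>)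
  have "((\<lambda>x. qf (a * (1 + x)) * qf (a * (1 - x))) has_real_derivative
     dqf (a * (1 + x)) * a * qf (a * (1 - x)) + qf (a * (1 + x)) * (dqf (a * (1 - x)) * (- a))) (at x)"
    using DERIV_mult[OF d1 d2] by (simp add: algebra_simps)
  then show ?thesis unfolding pp_def[abs_def] dpp_def by (simp add: algebra_simps)
qed

lemma dpp_neg: assumes "a > 0" "0 < x" "x < 1" shows "dpp a x < 0"
proof -
  have u: "a * (1 + x) > 0" and v: "a * (1 - x) > 0" using assms by auto
  have lt: "L1 (a * (1 + x)) < L1 (a * (1 - x))"
    by (rule L1_strict_dec) (use assms in auto)
  have "dpp a x = a * qf (a * (1 + x)) * qf (a * (1 - x)) * (L1 (a * (1 + x)) - L1 (a * (1 - x)))"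
    unfolding dpp_def dqf_eq[OF u] dqf_eq[OF v] by (simp add: algebra_simps)
  also have "\<dots> < 0"
    using assms qf_pos[of "a*(1+x)"] qf_pos[of "a*(1-x)"] lt
    by (intro mult_pos_neg) auto
  finally show ?thesis .
qed

lemma pp_pos: "a > 0 \<Longrightarrow> -1 \<le> x \<Longrightarrow> x \<le> 1 \<Longrightarrow> pp a x > 0"
  unfolding pp_def by (intro mult_pos_pos qf_pos) auto

lemma pp_cont: "a > 0 \<Longrightarrow> continuous_on {0..1} (pp a)"
  unfolding pp_def[abs_def]
  by (intro continuous_intros qf_cont_comp) auto

lemma alg2: fixes c s :: real assumes "c \<noteq> 0" "s \<noteq> 0"
  shows "s ^ (m + 1) / c\<^sup>2 = (s / c)\<^sup>2 * s ^ m / s"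
  using assms by (simp add: field_simps power2_eq_square)

lemma fn_aux_eq: assumes "s > 0" "n = m + 2"
  shows "fn_aux n s = (qf s)\<^sup>2 * s ^ m / s"
proof -
  have "fn_aux n s = s ^ (m + 1) / (1 - exp (- s))\<^sup>2" using assms by (simp add: fn_aux_def)
  also have "\<dots> = (s / (1 - exp (- s)))\<^sup>2 * s ^ m / s"
    using alg2[of "1 - exp (- s)" s m] den_pos[OF assms(1)] assms(1) by simp
  finally show ?thesis using assms by (simp add: qf_def)
qed

lemma alg3: fixes A w c P :: real assumes "A \<noteq> 0" "w \<noteq> 0"
  shows "c * P * (A * w) ^ m / (A * w) = (A ^ m / A) * P * (c * w ^ m / w)"
  using assms by (simp add: power_mult_distrib field_simps)

lemma alg4: fixes U V c Qu Qv :: real assumes "U \<noteq> 0" "V \<noteq> 0"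
  shows "c * (Qu\<^sup>2 * U ^ m / U) * (Qv\<^sup>2 * V ^ m / V) = c * (Qu * Qv)\<^sup>2 * (U * V) ^ m / (U * V)"
  using assms by (simp add: power_mult_distrib field_simps)

lemma integrand_eq: assumes "a > 0" "n = m + 2" "0 \<le> x" "x < 1"
  shows "((2 * real n - 3) * x\<^sup>2 - 1) * fn_aux n (a * (1 + x)) * fn_aux n (a * (1 - x))
     = - (a ^ (2 * m) / a\<^sup>2) * dhh m x * (pp a x)\<^sup>2"
proof -
  have u: "a * (1 + x) > 0" and v: "a * (1 - x) > 0" using assms by auto
  have e1: "2 * real n - 3 = 2 * real m + 1" using assms by simp
  have uv: "(a * (1 + x)) * (a * (1 - x)) = a\<^sup>2 * (1 - x\<^sup>2)" by (simp add: algebra_simps power2_eq_square)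
  have "x * x \<le> 1 * x" by (rule mult_right_mono) (use assms in auto)
  then have w: "1 - x\<^sup>2 > 0" using assms by (simp add: power2_eq_square)
  have key: "((2 * real m + 1) * x\<^sup>2 - 1) * (1 - x\<^sup>2) ^ m / (1 - x\<^sup>2) = - dhh m x"
  proof (cases m)
    case 0 then show ?thesis using w by (simp add: dhh_def field_simps)
  next
    case (Suc k)
    then show ?thesis using w by (simp add: dhh_def field_simps)
  qed
  have "((2 * real n - 3) * x\<^sup>2 - 1) * fn_aux n (a * (1 + x)) * fn_aux n (a * (1 - x))
     = ((2 * real m + 1) * x\<^sup>2 - 1) * (pp a x)\<^sup>2 * ((a * (1 + x)) * (a * (1 - x))) ^ m / ((a * (1 + x)) * (a * (1 - x)))"
    unfolding fn_aux_eq[OF u assms(2)] fn_aux_eq[OF v assms(2)] pp_def e1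
    by (rule alg4) (use u v in auto)
  also have "\<dots> = (a ^ (2 * m) / a\<^sup>2) * (pp a x)\<^sup>2 * (((2 * real m + 1) * x\<^sup>2 - 1) * (1 - x\<^sup>2) ^ m / (1 - x\<^sup>2))"
    unfolding uv using alg3[of "a\<^sup>2" "1 - x\<^sup>2" "(2 * real m + 1) * x\<^sup>2 - 1" "(pp a x)\<^sup>2" m] assms w
    by (simp add: power_mult)
  also have "\<dots> = - (a ^ (2 * m) / a\<^sup>2) * dhh m x * (pp a x)\<^sup>2" unfolding key by simp
  finally show ?thesis .
qed

theorem lemma3p1:
  fixes n :: nat and a :: real
  assumes "n \<ge> 2" and "a > 0"
  shows "I1 a n < 0"
proof -
  define m where "m = n - 2"
  have n: "n = m + 2" using assms(1) by (simp add: m_def)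
  have a: "a > 0" by (rule assms(2))
  define C where "C = a ^ (2 * m) / a\<^sup>2"
  have C: "C > 0" using a by (simp add: C_def)
  define J where "J x = - C * dhh m x * (pp a x)\<^sup>2" for x
  define F where "F x = - C * hh m x * (pp a x)\<^sup>2" for x
  define G where "G x = (if x < 1 then C * hh m x * (2 * pp a x * dpp a x) else 0)" for x
  have ppc: "continuous_on {0..1} (\<lambda>x. pp a x)" using pp_cont[OF a] by simp
  have contJ: "continuous_on {0..1} J"
    unfolding J_def dhh_def by (intro continuous_intros ppc)
  have contF: "continuous_on {0..1} F"
    unfolding F_def hh_def by (intro continuous_intros ppc)
  have I1J: "I1 a n = integral {0..1} J"
    unfolding I1_def
  proof (rule integral_spike[of "{1}"])
    fix x assume "x \<in> {0..1::real} - {1}"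
    then show "J x = ((2 * real n - 3) * x\<^sup>2 - 1) * fn_aux n (a * (1 + x)) * fn_aux n (a * (1 - x))"
      unfolding J_def C_def using integrand_eq[OF a n, of x] by simp
  qed auto
  have ftc: "((\<lambda>x. J x - G x) has_integral F 1 - F 0) {0..1}"
  proof (rule fundamental_theorem_of_calculus_interior[OF _ contF])
    fix x :: real assume x: "x \<in> {0<..<1}"
    have d: "(F has_real_derivative - C * (dhh m x * (pp a x)\<^sup>2 + hh m x * (2 * pp a x * dpp a x))) (at x)"
      unfolding F_def using x a
      by (auto intro!: derivative_eq_intros hh_deriv pp_deriv simp: algebra_simps power2_eq_square)
    have eq: "J x - G x = - C * (dhh m x * (pp a x)\<^sup>2 + hh m x * (2 * pp a x * dpp a x))"
      using x by (simp add: J_def G_def algebra_simps)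
    show "(F has_vector_derivative J x - G x) (at x)"
      unfolding eq using d by (simp add: has_real_derivative_iff_has_vector_derivative)
  qed simp
  have intJ: "(J has_integral integral {0..1} J) {0..1}"
    using integrable_continuous_interval[OF contJ] by (simp add: has_integral_integral)
  have hasG: "(G has_integral (integral {0..1} J - (F 1 - F 0))) {0..1}"
    using has_integral_diff[OF intJ ftc] by simp
  have F0: "F 0 = 0" by (simp add: F_def hh_def)
  have F1: "F 1 \<le> 0" using C by (simp add: F_def hh_def)
  have Gle: "G x \<le> 0" if "0 \<le> x" "x \<le> 1" for x
  proof (cases "x = 0 \<or> x = 1")
    case True then show ?thesis by (auto simp: G_def hh_def)
  next
    case False
    then have x: "0 < x" "x < 1" using that by auto
    have "x * x \<le> 1 * x" by (rule mult_right_mono) (use x in auto)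
    have w: "0 \<le> 1 - x\<^sup>2" using mult_le_one[of x x] x by (simp add: power2_eq_square)
    have "hh m x \<ge> 0" unfolding hh_def
      by (intro mult_nonneg_nonneg zero_le_power) (use x w in auto)
    then have "C * hh m x \<ge> 0" using C by simp
    moreover have "2 * pp a x * dpp a x < 0"
      using pp_pos[OF a, of x] dpp_neg[OF a x] x by (intro mult_pos_neg) auto
    ultimately show ?thesis using x by (simp add: G_def mult_nonneg_nonpos)
  qed
  have G14: "G (1/4) < 0"
  proof -
    have "hh m (1/4) > 0" by (simp add: hh_def power2_eq_square)
    then have "C * hh m (1/4) > 0" using C by simp
    moreover have "2 * pp a (1/4) * dpp a (1/4) < 0"
      using pp_pos[OF a, of "1/4"] dpp_neg[OF a, of "1/4"] by (intro mult_pos_neg) auto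
    ultimately show ?thesis by (simp add: G_def mult_pos_neg)
  qed
  have Gint: "G integrable_on {0..1}" using hasG by blast
  have Gint1: "G integrable_on {0..1/2}" by (rule integrable_subinterval_real[OF Gint]) auto
  have Gint2: "G integrable_on {1/2..1}" by (rule integrable_subinterval_real[OF Gint]) auto
  have comb: "integral {0..1/2} G + integral {1/2..1} G = integral {0..1} G"
    by (rule Henstock_Kurzweil_Integration.integral_combine[OF _ _ Gint]) auto
  have i2: "integral {1/2..1} G \<le> 0"
    using integral_le[OF Gint2 integrable_0, of ] Gle by (simp add: )
  have i1le: "integral {0..1/2} G \<le> 0"
    using integral_le[OF Gint1 integrable_0, of ] Gle by (simp add: )
  have contG1: "continuous_on {0..1/2} G"
  proof -
    have "continuous_on {0..1/2} (\<lambda>x. C * hh m x * (2 * pp a x * dpp a x))"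
    proof -
      have g1: "continuous_on {0..1/2} (\<lambda>x. a * (1 + x))" "continuous_on {0..1/2} (\<lambda>x. a * (1 - x))"
        by (intro continuous_intros)+
      have p1: "\<And>x. x \<in> {0..1/2} \<Longrightarrow> a * (1 + x) > 0" "\<And>x. x \<in> {0..1/2} \<Longrightarrow> a * (1 - x) > 0"
        using a by auto
      have c1: "continuous_on {0..1/2} (\<lambda>x. qf (a * (1 + x)))"
        by (rule qf_cont_comp[OF g1(1)]) (use p1 in force)
      have c2: "continuous_on {0..1/2} (\<lambda>x. qf (a * (1 - x)))"
        by (rule qf_cont_comp[OF g1(2)]) (use p1 in force)
      have c3: "continuous_on {0..1/2} (\<lambda>x. dqf (a * (1 + x)))"
        by (rule dqf_cont_comp[OF g1(1) p1(1)])
      have c4: "continuous_on {0..1/2} (\<lambda>x. dqf (a * (1 - x)))"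
        by (rule dqf_cont_comp[OF g1(2) p1(2)])
      show ?thesis unfolding hh_def pp_def dpp_def
        by (intro continuous_on_mult continuous_on_diff continuous_on_const continuous_on_id
            continuous_on_power c1 c2 c3 c4)
    qed
    then show ?thesis by (rule continuous_on_cong[THEN iffD1, rotated 2]) (auto simp: G_def)
  qed
  have i1: "integral {0..1/2} G < 0"
  proof (rule ccontr)
    assume "\<not> ?thesis"
    with i1le have z: "integral {0..1/2} G = 0" by simp
    have "((\<lambda>x. - G x) has_integral 0) (cbox 0 (1/2))"
      using has_integral_neg[OF has_integral_integral[THEN iffD1, OF Gint1]] z
      by (simp add: has_integral_integral)
    then have "- G (1/4) = 0"
      by (rule has_integral_0_cbox_imp_0[rotated 2])
        (use contG1 Gle in \<open>auto intro!: continuous_intros\<close>)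
    with G14 show False by simp
  qed
  have "integral {0..1} G < 0" using comb i1 i2 by simp
  moreover have "integral {0..1} G = integral {0..1} J - (F 1 - F 0)"
    using hasG by (rule integral_unique)
  ultimately show ?thesis using I1J F0 F1 by simp
qed

end
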